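(* Let $G$ be an instance of the rank-maximal matchings problem (with last-resort posts added), let $M$ be a rank-maximal matching in $G$, and let $C$ be a directed cycle in the switching graph $G_M$. Then $w(C)=0$.
   Context: An instance is a bipartite graph $G=(\mathcal{A}\cup\mathcal{P},E)$, $\mathcal{A}$ a set of applicants, $\mathcal{P}$ a set of posts, with $E=E_1\cup\dots\cup E_r$ a disjoint union; $(a,p)\in E_i$ means $p$ is an $i$-th choice of $a$, written $\mathrm{rank}(a,p)=i$ (ties allowed). Each applicant $a$ is additionally given its own dummy last-resort post $\ell(a)$ with $(a,\ell(a))\in E_{r+1}$; the resulting instance with ranks $1,\dots,r+1$ is still called $G$. The signature of a matching $M$ is $(x_1,\dots,x_{r+1})$, $x_i$ the number of applicants matched along rank-$i$ edges; $M$ is rank-maximal if its signature is lexicographically maximum. Even/odd/unreachable: given a bipartite graph and a maximum matching $N$, a vertex is even (odd) if there is an even (odd) length $N$-alternating path from an $N$-unmatched vertex to it, unreachable otherwise; independent of the choice of $N$. Irving et al.'s algorithm: $G'_1=(\mathcal{A}\cup\mathcal{P},E_1)$, $M_1$ a maximum matching. For $i=1,\dots,r$: let $\mathcal{E}_i,\mathcal{O}_i,\mathcal{U}_i$ be the even/odd/unreachable vertices of $G'_i$; delete all edges of rank $>i$ incident to $\mathcal{O}_i\cup\mathcal{U}_i$; delete from $G'_i$ edges joining $\mathcal{O}_i$ to $\mathcal{O}_i\cup\mathcal{U}_i$; add the remaining edges of $E_{i+1}$ to get $G'_{i+1}$; let $M_{i+1}$ be a maximum matching of $G'_{i+1}$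 augmenting $M_i$. With $\mathcal{E}_{r+1},\mathcal{O}_{r+1},\mathcal{U}_{r+1}$ the even/odd/unreachable vertices of $G'_{r+1}$, the reduced graph $G'$ is $G'_{r+1}$ minus the edges joining $\mathcal{O}_{r+1}$ to $\mathcal{O}_{r+1}\cup\mathcal{U}_{r+1}$ (independent of choices). Switching graph: for a rank-maximal matching $M$ (which matches all applicants), $G_M$ is the directed graph on $\mathcal{P}$ with an edge $(p_i,p_j)$ whenever some applicant $a$ has $(a,p_i)\in M$ and $(a,p_j)\in E(G')$, with weight $w(p_i,p_j)=\mathrm{rank}(a,p_j)-\mathrm{rank}(a,p_i)$; the weight $w(C)$ of a cycle is the sum of its edge weights. *)

theory Defs
  imports Main
begin

definition is_matching :: "('a \<times> 'q) set \<Rightarrow> ('a \<times> 'q) set \<Rightarrow> bool" where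
  "is_matching F N \<longleftrightarrow> N \<subseteq> F \<and>
     (\<forall>a q a' q'. (a,q) \<in> N \<longrightarrow> (a',q') \<in> N \<longrightarrow> (a = a' \<longleftrightarrow> q = q'))"

definition is_max_matching :: "('a \<times> 'q) set \<Rightarrow> ('a \<times> 'q) set \<Rightarrow> bool" where
  "is_max_matching F N \<longleftrightarrow> is_matching F N \<and> (\<forall>N'. is_matching F N' \<longrightarrow> card N' \<le> card N)"

definition adj :: "('a \<times> 'q) set \<Rightarrow> ('a + 'q) \<Rightarrow> ('a + 'q) \<Rightarrow> bool" where
  "adj F u v \<longleftrightarrow> (\<exists>a q. (a,q) \<in> F \<and> ((u = Inl a \<and> v = Inr q) \<or> (u = Inr q \<and> v = Inl a)))"

definition matched :: "('a \<times> 'q) set \<Rightarrow> ('a + 'q) \<Rightarrow> bool" where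
  "matched N v \<longleftrightarrow> (\<exists>u. adj N v u)"

text \<open>An N-alternating path in the graph with edge set F, starting with a non-N edge
  (so that it may start at an N-unmatched vertex): the i-th edge (0-based) lies in N
  iff i is odd.\<close>
definition alt_path :: "('a \<times> 'q) set \<Rightarrow> ('a \<times> 'q) set \<Rightarrow> ('a + 'q) list \<Rightarrow> bool" where
  "alt_path F N vs \<longleftrightarrow> vs \<noteq> [] \<and> distinct vs \<and>
     (\<forall>i. Suc i < length vs \<longrightarrow>
        adj F (vs ! i) (vs ! Suc i) \<and> (adj N (vs ! i) (vs ! Suc i) \<longleftrightarrow> odd i))"

definition reach_parity :: "('a + 'q) set \<Rightarrow> ('a \<times> 'q) set \<Rightarrow> ('a \<times> 'q) set \<Rightarrow> bool \<Rightarrow> ('a + 'q) \<Rightarrow> bool" where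
  "reach_parity V F N ev v \<longleftrightarrow> v \<in> V \<and>
     (\<exists>vs. alt_path F N vs \<and> hd vs \<in> V \<and> \<not> matched N (hd vs) \<and> last vs = v
           \<and> (even (length vs - 1) \<longleftrightarrow> ev))"

text \<open>A chosen maximum matching (the classification does not depend on the choice).\<close>
definition mm :: "('a \<times> 'q) set \<Rightarrow> ('a \<times> 'q) set" where
  "mm F = (SOME N. is_max_matching F N)"

definition evens :: "('a + 'q) set \<Rightarrow> ('a \<times> 'q) set \<Rightarrow> ('a + 'q) set" where
  "evens V F = {v. reach_parity V F (mm F) True v}"

definition odds :: "('a + 'q) set \<Rightarrow> ('a \<times> 'q) set \<Rightarrow> ('a + 'q) set" where
  "odds V F = {v. reach_parity V F (mm F) False v}"

definition unreach :: "('a + 'q) set \<Rightarrow> ('a \<times> 'q) set \<Rightarrow> ('a + 'q) set" where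
  "unreach V F = V - evens V F - odds V F"

definition joins_OOU :: "('a + 'q) set \<Rightarrow> ('a + 'q) set \<Rightarrow> ('a \<times> 'q) \<Rightarrow> bool" where
  "joins_OOU Od U e \<longleftrightarrow> (Inl (fst e) \<in> Od \<and> Inr (snd e) \<in> Od \<union> U)
                     \<or> (Inr (snd e) \<in> Od \<and> Inl (fst e) \<in> Od \<union> U)"

definition incident :: "('a + 'q) set \<Rightarrow> ('a \<times> 'q) \<Rightarrow> bool" where
  "incident S e \<longleftrightarrow> Inl (fst e) \<in> S \<or> Inr (snd e) \<in> S"

text \<open>Original instance: applicants A, posts P, edges E \<subseteq> A \<times> P with ranks rk in {1..r}.
  Extended post type: Inl p is an original post p, Inr a is the last-resort post l(a).\<close>

definition ext_E :: "'a set \<Rightarrow> ('a \<times> 'p) set \<Rightarrow> ('a \<times> ('p + 'a)) set" where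
  "ext_E A E = {(a, Inl p) | a p. (a,p) \<in> E} \<union> {(a, Inr a) | a. a \<in> A}"

definition ext_posts :: "'a set \<Rightarrow> 'p set \<Rightarrow> ('p + 'a) set" where
  "ext_posts A P = Inl ` P \<union> Inr ` A"

definition ext_V :: "'a set \<Rightarrow> 'p set \<Rightarrow> ('a + ('p + 'a)) set" where
  "ext_V A P = Inl ` A \<union> Inr ` ext_posts A P"

definition ext_rank :: "nat \<Rightarrow> ('a \<Rightarrow> 'p \<Rightarrow> nat) \<Rightarrow> 'a \<Rightarrow> ('p + 'a) \<Rightarrow> nat" where
  "ext_rank r rk a q = (case q of Inl p \<Rightarrow> rk a p | Inr b \<Rightarrow> Suc r)"

definition rank_edges :: "'a set \<Rightarrow> ('a \<times> 'p) set \<Rightarrow> ('a \<Rightarrow> 'p \<Rightarrow> nat) \<Rightarrow> nat \<Rightarrow> nat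
     \<Rightarrow> ('a \<times> ('p + 'a)) set" where
  "rank_edges A E rk r i = {e \<in> ext_E A E. ext_rank r rk (fst e) (snd e) = i}"

text \<open>irving A P E rk r k = (edge set of G'_{k+1}, union of O_j \<union> U_j for j \<le> k).\<close>
primrec irving :: "'a set \<Rightarrow> 'p set \<Rightarrow> ('a \<times> 'p) set \<Rightarrow> ('a \<Rightarrow> 'p \<Rightarrow> nat) \<Rightarrow> nat \<Rightarrow> nat
     \<Rightarrow> ('a \<times> ('p + 'a)) set \<times> ('a + ('p + 'a)) set" where
  "irving A P E rk r 0 = (rank_edges A E rk r 1, {})"
| "irving A P E rk r (Suc k) =
     (let F = fst (irving A P E rk r k); D = snd (irving A P E rk r k);
          V = ext_V A P; Od = odds V F; U = unreach V F; D' = D \<union> Od \<union> U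
      in ({e \<in> F. \<not> joins_OOU Od U e} \<union> {e \<in> rank_edges A E rk r (k + 2). \<not> incident D' e}, D'))"

definition reduced :: "'a set \<Rightarrow> 'p set \<Rightarrow> ('a \<times> 'p) set \<Rightarrow> ('a \<Rightarrow> 'p \<Rightarrow> nat) \<Rightarrow> nat
     \<Rightarrow> ('a \<times> ('p + 'a)) set" where
  "reduced A P E rk r =
     (let F = fst (irving A P E rk r r); V = ext_V A P
      in {e \<in> F. \<not> joins_OOU (odds V F) (unreach V F) e})"

definition signature :: "nat \<Rightarrow> ('a \<Rightarrow> 'p \<Rightarrow> nat) \<Rightarrow> ('a \<times> ('p + 'a)) set \<Rightarrow> nat \<Rightarrow> nat" where
  "signature r rk M i = card {e \<in> M. ext_rank r rk (fst e) (snd e) = i}"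

definition lex_le :: "nat \<Rightarrow> (nat \<Rightarrow> nat) \<Rightarrow> (nat \<Rightarrow> nat) \<Rightarrow> bool" where
  "lex_le n f g \<longleftrightarrow> (\<forall>i\<in>{1..n}. f i = g i) \<or>
     (\<exists>i\<in>{1..n}. f i < g i \<and> (\<forall>j\<in>{1..<i}. f j = g j))"

definition rank_maximal :: "'a set \<Rightarrow> ('a \<times> 'p) set \<Rightarrow> ('a \<Rightarrow> 'p \<Rightarrow> nat) \<Rightarrow> nat
     \<Rightarrow> ('a \<times> ('p + 'a)) set \<Rightarrow> bool" where
  "rank_maximal A E rk r M \<longleftrightarrow> is_matching (ext_E A E) M \<and>
     (\<forall>N. is_matching (ext_E A E) N \<longrightarrow> lex_le (Suc r) (signature r rk N) (signature r rk M))"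

definition partner :: "('a \<times> 'q) set \<Rightarrow> 'q \<Rightarrow> 'a" where
  "partner M q = (THE a. (a, q) \<in> M)"

definition sw_edge :: "'a set \<Rightarrow> 'p set \<Rightarrow> ('a \<times> 'p) set \<Rightarrow> ('a \<Rightarrow> 'p \<Rightarrow> nat) \<Rightarrow> nat
     \<Rightarrow> ('a \<times> ('p + 'a)) set \<Rightarrow> ('p + 'a) \<Rightarrow> ('p + 'a) \<Rightarrow> bool" where
  "sw_edge A P E rk r M p q \<longleftrightarrow>
     p \<in> ext_posts A P \<and> q \<in> ext_posts A P \<and>
     (\<exists>a. (a, p) \<in> M \<and> (a, q) \<in> reduced A P E rk r)"

definition sw_weight :: "nat \<Rightarrow> ('a \<Rightarrow> 'p \<Rightarrow> nat) \<Rightarrow> ('a \<times> ('p + 'a)) set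
     \<Rightarrow> ('p + 'a) \<Rightarrow> ('p + 'a) \<Rightarrow> int" where
  "sw_weight r rk M p q =
     int (ext_rank r rk (partner M p) q) - int (ext_rank r rk (partner M p) p)"

definition sw_cycle :: "'a set \<Rightarrow> 'p set \<Rightarrow> ('a \<times> 'p) set \<Rightarrow> ('a \<Rightarrow> 'p \<Rightarrow> nat) \<Rightarrow> nat
     \<Rightarrow> ('a \<times> ('p + 'a)) set \<Rightarrow> ('p + 'a) list \<Rightarrow> bool" where
  "sw_cycle A P E rk r M cs \<longleftrightarrow> cs \<noteq> [] \<and> distinct cs \<and>
     (\<forall>j < length cs. sw_edge A P E rk r M (cs ! j) (cs ! ((j + 1) mod length cs)))"

definition cycle_weight :: "nat \<Rightarrow> ('a \<Rightarrow> 'p \<Rightarrow> nat) \<Rightarrow> ('a \<times> ('p + 'a)) set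
     \<Rightarrow> ('p + 'a) list \<Rightarrow> int" where
  "cycle_weight r rk M cs =
     (\<Sum>j < length cs. sw_weight r rk M (cs ! j) (cs ! ((j + 1) mod length cs)))"

end

theory Submission
  imports Defs
begin


definition vset :: "('a \<times> 'q) \<Rightarrow> ('a + 'q) set" where
  "vset e = {Inl (fst e), Inr (snd e)}"

definition Mv :: "('a \<times> 'q) set \<Rightarrow> ('a + 'q) set" where
  "Mv N = \<Union> (vset ` N)"

definition mtch :: "('a \<times> 'q) set \<Rightarrow> bool" where
  "mtch N \<longleftrightarrow> (\<forall>e\<in>N. \<forall>e'\<in>N. vset e \<inter> vset e' \<noteq> {} \<longrightarrow> e = e')"

lemma vset_inter: "vset e \<inter> vset e' \<noteq> {} \<longleftrightarrow> fst e = fst e' \<or> snd e = snd e'"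
  by (auto simp: vset_def)

lemma vset_inj: "vset e = vset e' \<Longrightarrow> e = e'"
  by (cases e; cases e') (auto simp: vset_def doubleton_eq_iff)

lemma is_matching_iff: "is_matching F N \<longleftrightarrow> N \<subseteq> F \<and> mtch N"
  unfolding is_matching_def mtch_def vset_inter
  apply (rule iffI)
   apply (clarsimp simp: prod_eq_iff)
  apply clarsimp
  by (metis fst_conv snd_conv prod.inject)

lemma adj_iff: "adj N u v \<longleftrightarrow> (\<exists>e\<in>N. vset e = {u,v})"
  unfolding adj_def vset_def by (auto simp: doubleton_eq_iff) force+

lemma matched_iff: "matched N v \<longleftrightarrow> v \<in> Mv N"
  unfolding matched_def adj_iff Mv_def vset_def by auto

lemma adj_isl: "adj N u v \<Longrightarrow> isl u \<noteq> isl v"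
  unfolding adj_def by auto

lemma adj_sym: "adj N u v \<Longrightarrow> adj N v u"
  unfolding adj_def by auto

lemma adj_mono: "adj N u v \<Longrightarrow> N \<subseteq> F \<Longrightarrow> adj F u v"
  unfolding adj_def by auto

lemma partner_unique: "mtch N \<Longrightarrow> adj N v u \<Longrightarrow> adj N v u' \<Longrightarrow> u = u'"
proof -
  assume m: "mtch N" and a1: "adj N v u" and a2: "adj N v u'"
  then obtain e e' where e: "e \<in> N" "vset e = {v,u}" and e': "e' \<in> N" "vset e' = {v,u'}"
    by (auto simp: adj_iff)
  then have "vset e \<inter> vset e' \<noteq> {}" by auto
  with m e e' have "e = e'" by (auto simp: mtch_def)
  with e e' have "{v,u} = {v,u'}" by simp
  moreover have "u \<noteq> v" "u' \<noteq> v" using a1 a2 adj_isl by blast+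
  ultimately show "u = u'" by (auto simp: doubleton_eq_iff)
qed



lemma alt_bip:
  assumes "alt_path F N vs" "i < length vs"
  shows "isl (vs!i) = (isl (vs!0) = even i)"
  using assms(2)
proof (induction i)
  case 0 thus ?case by simp
next
  case (Suc i)
  then have "adj F (vs!i) (vs!Suc i)" using assms(1) by (auto simp: alt_path_def)
  then have "isl (vs!i) \<noteq> isl (vs!Suc i)" by (rule adj_isl)
  with Suc show ?case by auto
qed

lemma alt_take: "alt_path F N vs \<Longrightarrow> 0 < n \<Longrightarrow> alt_path F N (take n vs)"
  unfolding alt_path_def by auto

lemma alt_snoc:
  assumes "alt_path F N vs" "adj F (last vs) w" "w \<notin> set vs"
    "adj N (last vs) w \<longleftrightarrow> odd (length vs - 1)"
  shows "alt_path F N (vs @ [w])"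
proof -
  have ne: "vs \<noteq> []" using assms(1) by (simp add: alt_path_def)
  show ?thesis
    unfolding alt_path_def
  proof (intro conjI allI impI)
    show "vs @ [w] \<noteq> []" by simp
    show "distinct (vs @ [w])" using assms(1,3) by (simp add: alt_path_def)
    fix i assume i: "Suc i < length (vs @ [w])"
    have H: "adj F ((vs @ [w]) ! i) ((vs @ [w]) ! Suc i) \<and>
          adj N ((vs @ [w]) ! i) ((vs @ [w]) ! Suc i) = odd i"
    proof (cases "Suc i < length vs")
      case True
      then show ?thesis using assms(1) by (simp add: alt_path_def nth_append)
    next
      case False
      then have "i = length vs - 1" using i by simp
      moreover have "vs ! (length vs - 1) = last vs" using ne by (simp add: last_conv_nth)
      ultimately show ?thesis using assms(2,4) ne by (simp add: nth_append)
    qed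
    then show "adj F ((vs @ [w]) ! i) ((vs @ [w]) ! Suc i)" by simp
    from H show "adj N ((vs @ [w]) ! i) ((vs @ [w]) ! Suc i) = odd i" by simp
  qed
qed

lemma rp_intro:
  assumes "alt_path F N vs" "hd vs \<in> V" "\<not> matched N (hd vs)" "k < length vs" "vs!k \<in> V"
  shows "reach_parity V F N (even k) (vs!k)"
  unfolding reach_parity_def
proof (intro conjI exI)
  show "vs!k \<in> V" by fact
  show "alt_path F N (take (Suc k) vs)" using assms(1) by (rule alt_take) simp
  have ne: "vs \<noteq> []" using assms(4) by auto
  show "hd (take (Suc k) vs) \<in> V" "\<not> matched N (hd (take (Suc k) vs))"
    using assms(2,3) ne by (simp_all add: hd_take)
  show "last (take (Suc k) vs) = vs ! k" using assms(4) by (simp add: take_Suc_conv_app_nth)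
  show "even (length (take (Suc k) vs) - 1) = even k" using assms(4) by simp
qed

lemma AUG:
  assumes finF: "finite F" and NF: "N \<subseteq> F" and m: "mtch N" and ap: "alt_path F N vs"
    and h: "\<not> matched N (hd vs)" and l: "\<not> matched N (last vs)" and ev: "even (length vs)"
  shows "\<exists>N'. N' \<subseteq> F \<and> mtch N' \<and> card N' = Suc (card N)"
proof -
  define L where "L = length vs"
  have ne: "vs \<noteq> []" using ap by (simp add: alt_path_def)
  have L0: "L > 0" using ne by (simp add: L_def)
  have L2: "L \<ge> 2" using L0 ev unfolding L_def by presburger
  have dist: "distinct vs" using ap by (simp add: alt_path_def)
  have edge: "\<And>i. Suc i < L \<Longrightarrow> adj F (vs!i) (vs!Suc i) \<and> (adj N (vs!i) (vs!Suc i) \<longleftrightarrow> odd i)"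
    using ap by (simp add: alt_path_def L_def)
  define eix where "eix i = (THE e. e \<in> F \<and> vset e = {vs!i, vs!Suc i})" for i
  have eix_eq: "eix i = e" if "e \<in> F" "vset e = {vs!i, vs!Suc i}" for i e
    unfolding eix_def using that by (intro the_equality) (auto intro: vset_inj)
  have eix: "eix i \<in> F \<and> vset (eix i) = {vs!i, vs!Suc i}" if iL: "Suc i < L" for i
  proof -
    obtain e where "e \<in> F" "vset e = {vs!i, vs!Suc i}" using edge[OF iL] adj_iff by metis
    then show ?thesis using eix_eq by simp
  qed
  have eixN: "eix i \<in> N \<longleftrightarrow> odd i" if "Suc i < L" for i
  proof -
    have "adj N (vs!i) (vs!Suc i) \<longleftrightarrow> eix i \<in> N"
      using eix[OF that] eix_eq NF by (auto simp: adj_iff)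
    then show ?thesis using edge[OF that] by simp
  qed
  have vin: "vs!j \<in> vset (eix i) \<longleftrightarrow> j = i \<or> j = Suc i" if "Suc i < L" "j < L" for i j
    using eix[OF that(1)] that dist by (auto simp: L_def nth_eq_iff_index_eq)
  have vsub: "vset (eix i) \<subseteq> set vs" if "Suc i < L" for i
    using eix[OF that] that by (auto simp: L_def)
  define IO where "IO = {i. Suc i < L \<and> odd i}"
  define IE where "IE = {i. Suc i < L \<and> even i}"
  define PO where "PO = eix ` IO"
  define PE where "PE = eix ` IE"
  have inj: "inj_on eix {i. Suc i < L}"
  proof (rule inj_onI)
    fix i j assume i: "i \<in> {i. Suc i < L}" and j: "j \<in> {i. Suc i < L}" and eq: "eix i = eix j"
    have "vs!i \<in> vset (eix j)" using eix[of i] i by (simp add: eq[symmetric])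
    then have "i = j \<or> i = Suc j" using vin[of j i] i j by simp
    moreover have "vs!j \<in> vset (eix i)" using eix[of j] j by (simp add: eq)
    then have "j = i \<or> j = Suc i" using vin[of i j] i j by simp
    ultimately show "i = j" by auto
  qed
  have finIO: "finite IO" unfolding IO_def by (rule finite_subset[of _ "{..<L}"]) auto
  have IE_eq: "IE = insert 0 (Suc ` IO)"
  proof (intro set_eqI iffI)
    fix i assume "i \<in> IE"
    then show "i \<in> insert 0 (Suc ` IO)" unfolding IE_def IO_def
      by (cases i) auto
  next
    fix i assume "i \<in> insert 0 (Suc ` IO)"
    then show "i \<in> IE" unfolding IE_def IO_def using L2 ev
      by (auto simp: L_def) (metis Suc_lessI even_Suc)
  qed
  have cIE: "card IE = Suc (card IO)"
    unfolding IE_eq using finIO by (simp add: card_image)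
  have cPO: "card PO = card IO" unfolding PO_def
    by (rule card_image, rule inj_on_subset[OF inj]) (auto simp: IO_def)
  have cPE: "card PE = card IE" unfolding PE_def
    by (rule card_image, rule inj_on_subset[OF inj]) (auto simp: IE_def)
  have PON: "PO \<subseteq> N" unfolding PO_def IO_def using eixN by auto
  have PEN: "PE \<inter> N = {}" unfolding PE_def IE_def using eixN by auto
  have PEF: "PE \<subseteq> F" unfolding PE_def IE_def using eix by auto
  have finN: "finite N" using finF NF finite_subset by blast
  have finPE: "finite PE" using finF PEF finite_subset by blast
  define N' where "N' = (N - PO) \<union> PE"
  have cN': "card N' = Suc (card N)"
  proof -
    have "card N' = card (N - PO) + card PE"
      unfolding N'_def using finN finPE PEN by (intro card_Un_disjoint) auto
    also have "card (N - PO) = card N - card PO"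
      using PON finN by (simp add: card_Diff_subset finite_subset)
    also have "card PO \<le> card N" using PON finN by (rule card_mono[rotated])
    ultimately show ?thesis using cPO cPE cIE by simp
  qed
  have away: "vset e \<inter> set vs = {}" if "e \<in> N - PO" for e
  proof (rule ccontr)
    assume "vset e \<inter> set vs \<noteq> {}"
    then obtain j where j: "j < L" "vs!j \<in> vset e" by (auto simp: in_set_conv_nth L_def)
    have eN: "e \<in> N" "e \<notin> PO" using that by auto
    have mj: "matched N (vs!j)" using eN j by (auto simp: matched_iff Mv_def)
    have j0: "j \<noteq> 0" using mj h ne by (metis hd_conv_nth)
    have jL: "Suc j \<noteq> L"
    proof
      assume "Suc j = L" then have "j = length vs - 1" by (simp add: L_def)
      then show False using mj l ne by (simp add: last_conv_nth)
    qed
    show False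
    proof (cases "odd j")
      case True
      then have "Suc j < L" using j jL by simp
      then have "eix j \<in> N" "vs!j \<in> vset (eix j)" using eixN True eix by auto
      then have "e = eix j" using m eN j unfolding mtch_def by blast
      moreover have "j \<in> IO" using \<open>Suc j < L\<close> True by (simp add: IO_def)
      ultimately show False using eN by (simp add: PO_def)
    next
      case False
      then obtain k where k: "j = Suc k" using j0 by (cases j) auto
      then have "Suc k < L" "odd k" using j False by auto
      then have "eix k \<in> N" "vs!j \<in> vset (eix k)" using eixN eix k by auto
      then have "e = eix k" using m eN j unfolding mtch_def by blast
      moreover have "k \<in> IO" using \<open>Suc k < L\<close> \<open>odd k\<close> by (simp add: IO_def)
      ultimately show False using eN by (simp add: PO_def)
    qed
  qed
  have mN': "mtch N'"
    unfolding mtch_def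
  proof (intro ballI impI)
    fix e e' assume e: "e \<in> N'" and e': "e' \<in> N'" and int: "vset e \<inter> vset e' \<noteq> {}"
    show "e = e'"
    proof (cases "e \<in> PE")
      case True
      then obtain i where i: "i \<in> IE" "e = eix i" by (auto simp: PE_def)
      show ?thesis
      proof (cases "e' \<in> PE")
        case True
        then obtain j where j: "j \<in> IE" "e' = eix j" by (auto simp: PE_def)
        obtain w where w: "w \<in> vset e" "w \<in> vset e'" using int by blast
        have iL: "Suc i < L" and jL: "Suc j < L" using i j by (auto simp: IE_def)
        from w i eix[OF iL] have "w = vs!i \<or> w = vs!Suc i" by auto
        then obtain x where x: "x = i \<or> x = Suc i" "w = vs!x" by blast
        then have "x < L" using iL by auto
        then have "x = j \<or> x = Suc j" using vin[OF jL, of x] w x j by simp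
        with x i j have "i = j" by (auto simp: IE_def)
        then show ?thesis using i j by simp
      next
        case False
        then have "e' \<in> N - PO" using e' by (auto simp: N'_def)
        then have "vset e' \<inter> set vs = {}" by (rule away)
        moreover have "vset e \<subseteq> set vs" using i vsub by (auto simp: IE_def)
        ultimately show ?thesis using int by blast
      qed
    next
      case False
      then have eN: "e \<in> N - PO" using e by (auto simp: N'_def)
      show ?thesis
      proof (cases "e' \<in> PE")
        case True
        then obtain j where j: "j \<in> IE" "e' = eix j" by (auto simp: PE_def)
        have "vset e \<inter> set vs = {}" using eN by (rule away)
        moreover have "vset e' \<subseteq> set vs" using j vsub by (auto simp: IE_def)
        ultimately show ?thesis using int by blast
      next
        case False
        then have "e' \<in> N" using e' by (auto simp: N'_def)
        then show ?thesis using m eN int unfolding mtch_def by blast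
      qed
    qed
  qed
  have "N' \<subseteq> F" using NF PEF by (auto simp: N'_def)
  then show ?thesis using mN' cN' by blast
qed



lemma rp_elim:
  assumes "reach_parity V F N ev v"
  obtains vs where "alt_path F N vs" "hd vs \<in> V" "\<not> matched N (hd vs)" "last vs = v"
    "even (length vs - 1) \<longleftrightarrow> ev" "v \<in> V"
  using assms unfolding reach_parity_def by blast

lemma S1:
  assumes m: "mtch N" and NF: "N \<subseteq> F" and ru: "reach_parity V F N True u"
    and uv: "adj F u v" and vV: "v \<in> V"
  shows "reach_parity V F N False v"
proof -
  obtain vs where ap: "alt_path F N vs" and hV: "hd vs \<in> V" and hm: "\<not> matched N (hd vs)"
    and lu: "last vs = u" and ev: "even (length vs - 1)"
    using ru by (rule rp_elim) blast
  define L where "L = length vs"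
  have ne: "vs \<noteq> []" using ap by (simp add: alt_path_def)
  have L0: "L > 0" using ne by (simp add: L_def)
  have uL: "vs ! (L - 1) = u" using lu ne by (simp add: last_conv_nth L_def)
  have hd0: "hd vs = vs ! 0" using ne by (simp add: hd_conv_nth)
  have bipu: "isl u = isl (vs!0)" using alt_bip[OF ap, of "L-1"] uL ev L0 by (simp add: L_def)
  have isluv: "isl u \<noteq> isl v" using uv by (rule adj_isl)
  have edge: "\<And>i. Suc i < L \<Longrightarrow> adj F (vs!i) (vs!Suc i) \<and> (adj N (vs!i) (vs!Suc i) \<longleftrightarrow> odd i)"
    using ap by (simp add: alt_path_def L_def)
  show ?thesis
  proof (cases "adj N u v")
    case True
    have "L \<noteq> 1"
    proof
      assume "L = 1" then have "hd vs = u" using uL hd0 by simp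
      then show False using hm True by (auto simp: matched_def)
    qed
    then have L3: "L \<ge> 3" using L0 ev unfolding L_def by presburger
    have s: "Suc (L-2) = L - 1" using L3 by simp
    have o: "odd (L-2)" using L3 ev unfolding L_def by presburger
    have "adj N (vs!(L-2)) u" using edge[of "L-2"] L3 o s uL by simp
    then have "vs!(L-2) = v" using partner_unique[OF m adj_sym True] by blast
    then show ?thesis using rp_intro[OF ap hV hm, of "L-2"] L3 o vV by (simp add: L_def)
  next
    case False
    note nadj = False
    show ?thesis
    proof (cases "v \<in> set vs")
      case True
      then obtain k where k: "k < L" "vs!k = v" by (auto simp: in_set_conv_nth L_def)
      have kl: "k < length vs" using k by (simp add: L_def)
      have "isl v = (isl (vs!0) = even k)" using alt_bip[OF ap kl] k(2) by simp
      then have "odd k" using bipu isluv by auto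
      then show ?thesis using rp_intro[OF ap hV hm, of k] k vV by (simp add: L_def)
    next
      case False
      have ap': "alt_path F N (vs @ [v])" using alt_snoc[OF ap] uv lu False nadj ev by simp
      have "reach_parity V F N (even L) ((vs @ [v]) ! L)"
        using rp_intro[OF ap', where k=L] hV hm ne vV by (simp add: L_def)
      moreover have "odd L" using ev L0 unfolding L_def by presburger
      ultimately show ?thesis by (simp add: L_def)
    qed
  qed
qed

lemma P2:
  assumes m: "mtch N" and NF: "N \<subseteq> F" and rv: "reach_parity V F N False v"
    and vw: "adj N v w" and wV: "w \<in> V"
  shows "reach_parity V F N True w"
proof -
  obtain vs where ap: "alt_path F N vs" and hV: "hd vs \<in> V" and hm: "\<not> matched N (hd vs)"
    and lv: "last vs = v" and od: "odd (length vs - 1)"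
    using rv by (rule rp_elim) blast
  define L where "L = length vs"
  have ne: "vs \<noteq> []" using ap by (simp add: alt_path_def)
  have L0: "L > 0" using ne by (simp add: L_def)
  have vL: "vs ! (L - 1) = v" using lv ne by (simp add: last_conv_nth L_def)
  have hd0: "hd vs = vs ! 0" using ne by (simp add: hd_conv_nth)
  have dist: "distinct vs" using ap by (simp add: alt_path_def)
  have bipv: "isl v \<noteq> isl (vs!0)" using alt_bip[OF ap, of "L-1"] vL od L0 by (simp add: L_def)
  have iw: "isl v \<noteq> isl w" using vw by (rule adj_isl)
  have edge: "\<And>i. Suc i < L \<Longrightarrow> adj F (vs!i) (vs!Suc i) \<and> (adj N (vs!i) (vs!Suc i) \<longleftrightarrow> odd i)"
    using ap by (simp add: alt_path_def L_def)
  have notin: "w \<notin> set vs"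
  proof
    assume "w \<in> set vs"
    then obtain k where k: "k < L" "vs!k = w" by (auto simp: in_set_conv_nth L_def)
    have kl: "k < length vs" using k by (simp add: L_def)
    have "isl w = (isl (vs!0) = even k)" using alt_bip[OF ap kl] k(2) by simp
    then have ek: "even k" using bipv iw by auto
    have "k \<noteq> 0"
    proof
      assume "k = 0" then have "hd vs = w" using k hd0 by simp
      then show False using hm vw adj_sym by (auto simp: matched_def)
    qed
    then obtain j where j: "k = Suc j" by (cases k) auto
    then have "odd j" using ek by simp
    then have "adj N (vs!j) w" using edge[of j] j k by simp
    then have "vs!j = v" using partner_unique[OF m adj_sym adj_sym[OF vw]] by blast
    then have "j = L - 1" using vL nth_eq_iff_index_eq[OF dist, of j "L-1"] j k L0 by (simp add: L_def)
    then show False using j k by simp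
  qed
  have "adj F (last vs) w" using lv vw NF adj_mono by blast
  then have ap': "alt_path F N (vs @ [w])" using alt_snoc[OF ap] notin lv vw od by simp
  have "reach_parity V F N (even L) ((vs @ [w]) ! L)"
    using rp_intro[OF ap', where k=L] hV hm ne wV by (simp add: L_def)
  moreover have "even L" using od L0 unfolding L_def by presburger
  ultimately show ?thesis by (simp add: L_def)
qed

lemma P1:
  assumes fin: "finite F" and mx: "is_max_matching F N" and rv: "reach_parity V F N False v"
  shows "matched N v"
proof (rule ccontr)
  assume nm: "\<not> matched N v"
  have NF: "N \<subseteq> F" and m: "mtch N" using mx by (auto simp: is_max_matching_def is_matching_iff)
  obtain vs where ap: "alt_path F N vs" and hm: "\<not> matched N (hd vs)"
    and lv: "last vs = v" and od: "odd (length vs - 1)"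
    using rv by (rule rp_elim) blast
  have ne: "vs \<noteq> []" using ap by (simp add: alt_path_def)
  then have "even (length vs)" using od by (cases vs) auto
  then obtain N' where "N' \<subseteq> F" "mtch N'" "card N' = Suc (card N)"
    using AUG[OF fin NF m ap hm] nm lv by blast
  then show False using mx by (auto simp: is_max_matching_def is_matching_iff)
qed

lemma P3:
  assumes fin: "finite F" and mx: "is_max_matching F N"
    and re: "reach_parity V F N True x" and ro: "reach_parity V F N False x"
  shows False
proof -
  have NF: "N \<subseteq> F" and m: "mtch N" using mx by (auto simp: is_max_matching_def is_matching_iff)
  obtain P where apP: "alt_path F N P" and hP: "\<not> matched N (hd P)"
    and lP: "last P = x" and eP: "even (length P - 1)"
    using re by (rule rp_elim) blast
  obtain Q where apQ: "alt_path F N Q" and hQ: "\<not> matched N (hd Q)"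
    and lQ: "last Q = x" and oQ: "odd (length Q - 1)"
    using ro by (rule rp_elim) blast
  have neP: "P \<noteq> []" using apP by (simp add: alt_path_def)
  have neQ: "Q \<noteq> []" using apQ by (simp add: alt_path_def)
  have dP: "distinct P" using apP by (simp add: alt_path_def)
  have dQ: "distinct Q" using apQ by (simp add: alt_path_def)
  have xP: "P ! (length P - 1) = x" using lP neP by (simp add: last_conv_nth)
  have xQ: "Q ! (length Q - 1) = x" using lQ neQ by (simp add: last_conv_nth)
  have bP: "isl x = isl (P!0)" using alt_bip[OF apP, of "length P - 1"] xP eP neP by simp
  have bQ: "isl x \<noteq> isl (Q!0)" using alt_bip[OF apQ, of "length Q - 1"] xQ oQ neQ by simp
  define S where "S = {m. m < length Q \<and> Q!m \<in> set P}"
  have "length Q - 1 \<in> S" using xQ neQ neP lP last_in_set[OF neP] by (auto simp: S_def)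
  then have Sne: "S \<noteq> {}" by blast
  define m where "m = (LEAST m. m \<in> S)"
  have mS: "m \<in> S" unfolding m_def using Sne by (metis LeastI_ex ex_in_conv)
  have mmin: "\<And>j. j < m \<Longrightarrow> Q!j \<notin> set P"
  proof -
    fix j assume "j < m"
    then have "j \<notin> S" unfolding m_def using not_less_Least by blast
    moreover have "j < length Q" using \<open>j < m\<close> mS by (simp add: S_def)
    ultimately show "Q!j \<notin> set P" by (simp add: S_def)
  qed
  have mQ: "m < length Q" using mS by (simp add: S_def)
  obtain k where k: "k < length P" "P!k = Q!m" using mS by (auto simp: S_def in_set_conv_nth)
  have par: "even k \<noteq> even m"
    using alt_bip[OF apP k(1)] alt_bip[OF apQ mQ] k(2) bP bQ by auto
  define R where "R = take (Suc k) P @ rev (take m Q)"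
  have lenR: "length R = Suc k + m" using k mQ by (simp add: R_def)
  have R1: "R!j = P!j" if "j \<le> k" for j
    using that k by (simp add: R_def nth_append)
  have R2: "R!j = Q!(k+m-j)" if "k \<le> j" "j < Suc k + m" for j
  proof (cases "j = k")
    case True then show ?thesis using R1 k by simp
  next
    case False
    then have "j > k" using that by simp
    then have "R!j = rev (take m Q) ! (j - Suc k)" using k by (simp add: R_def nth_append)
    also have "\<dots> = take m Q ! (m - Suc (j - Suc k))"
      using that \<open>j > k\<close> mQ by (simp add: rev_nth)
    also have "\<dots> = Q!(k+m-j)" using that \<open>j > k\<close> mQ by (simp add: add.commute)
    finally show ?thesis .
  qed
  have edP: "\<And>i. Suc i < length P \<Longrightarrow> adj F (P!i) (P!Suc i) \<and> (adj N (P!i) (P!Suc i) \<longleftrightarrow> odd i)"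
    using apP by (simp add: alt_path_def)
  have edQ: "\<And>i. Suc i < length Q \<Longrightarrow> adj F (Q!i) (Q!Suc i) \<and> (adj N (Q!i) (Q!Suc i) \<longleftrightarrow> odd i)"
    using apQ by (simp add: alt_path_def)
  have apR: "alt_path F N R"
    unfolding alt_path_def
  proof (intro conjI allI impI)
    show "R \<noteq> []" using lenR by auto
    have "set (take m Q) \<inter> set P = {}"
      using mmin mQ by (auto simp: in_set_conv_nth)
    moreover have "set (take (Suc k) P) \<subseteq> set P" by (rule set_take_subset)
    ultimately show "distinct R" using dP dQ by (auto simp: R_def)
  next
    fix i assume i: "Suc i < length R"
    have H: "adj F (R!i) (R!Suc i) \<and> (adj N (R!i) (R!Suc i) \<longleftrightarrow> odd i)"
    proof (cases "Suc i \<le> k")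
      case True
      then show ?thesis using R1[of i] R1[of "Suc i"] edP[of i] k by simp
    next
      case False
      define t where "t = k + m - Suc i"
      have t1: "Suc t = k + m - i" using False i lenR by (simp add: t_def)
      have ri: "R!i = Q!(Suc t)" using R2[of i] False i lenR t1 by simp
      have rs: "R!Suc i = Q!t" using R2[of "Suc i"] False i lenR by (simp add: t_def)
      have tQ: "Suc t < length Q" using t1 mQ False by simp
      have pt: "odd t = odd i" using par t1 False i lenR unfolding t_def by presburger
      show ?thesis using edQ[OF tQ] ri rs pt adj_sym by metis
    qed
    then show "adj F (R!i) (R!Suc i)" by simp
    from H show "adj N (R!i) (R!Suc i) = odd i" by simp
  qed
  have hR: "hd R = hd P" using neP by (simp add: R_def)
  have lR: "last R = hd Q"
  proof -
    have "R \<noteq> []" using lenR by auto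
    then have "last R = R!(length R - 1)" by (rule last_conv_nth)
    then have "last R = R!(k+m)" using lenR by simp
    also have "\<dots> = Q!0" using R2[of "k+m"] by simp
    finally show ?thesis using neQ by (simp add: hd_conv_nth)
  qed
  have "even (length R)" using lenR par by simp
  then obtain N' where "N' \<subseteq> F" "mtch N'" "card N' = Suc (card N)"
    using AUG[OF fin NF m apR] hR lR hP hQ by metis
  then show False using mx by (auto simp: is_max_matching_def is_matching_iff)
qed



definition c2 :: "('a + 'q) set \<Rightarrow> ('a + 'q) set \<Rightarrow> ('a + 'q) \<Rightarrow> nat" where
  "c2 Oo U v = (if v \<in> Oo then 2 else if v \<in> U then 1 else 0)"

definition wt :: "('a + 'q) set \<Rightarrow> ('a + 'q) set \<Rightarrow> ('a \<times> 'q) \<Rightarrow> nat" where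
  "wt Oo U e = c2 Oo U (Inl (fst e)) + c2 Oo U (Inr (snd e))"

lemma wt_sum: "wt Oo U e = (\<Sum>v\<in>vset e. c2 Oo U v)"
  by (simp add: wt_def vset_def)

lemma wt_le2: "wt Oo U e \<le> 2 \<longleftrightarrow> \<not> joins_OOU Oo U e"
  by (auto simp: wt_def c2_def joins_OOU_def)

lemma finite_Mv: "finite X \<Longrightarrow> finite (Mv X)"
  by (auto simp: Mv_def vset_def)

lemma WS: assumes "mtch X" "finite X"
  shows "(\<Sum>e\<in>X. wt Oo U e) = (\<Sum>v\<in>Mv X. c2 Oo U v)"
proof -
  have "(\<Sum>v\<in>Mv X. c2 Oo U v) = (\<Sum>e\<in>X. \<Sum>v\<in>vset e. c2 Oo U v)"
    unfolding Mv_def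
  proof (rule sum.UNION_disjoint)
    show "finite X" by fact
    show "\<forall>i\<in>X. finite (vset i)" by (simp add: vset_def)
    show "\<forall>i\<in>X. \<forall>j\<in>X. i \<noteq> j \<longrightarrow> vset i \<inter> vset j = {}"
      using assms(1) unfolding mtch_def by blast
  qed
  then show ?thesis by (simp add: wt_sum)
qed

lemma c2_tot:
  assumes "finite V" "Oo \<union> U \<subseteq> V" "Oo \<union> U \<subseteq> W" "finite W"
  shows "(\<Sum>v\<in>V. c2 Oo U v) \<le> (\<Sum>v\<in>W. c2 Oo U v)"
proof -
  have "(\<Sum>v\<in>V. c2 Oo U v) = (\<Sum>v\<in>Oo \<union> U. c2 Oo U v)"
    using assms(1,2) by (intro sum.mono_neutral_right) (auto simp: c2_def)
  also have "\<dots> \<le> (\<Sum>v\<in>W. c2 Oo U v)"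
    using assms(3,4) by (intro sum_mono2) auto
  finally show ?thesis .
qed

lemma LB:
  assumes "mtch X" "finite X" "finite V" "Oo \<union> U \<subseteq> V" "Oo \<union> U \<subseteq> Mv X"
    "\<forall>e\<in>X. \<not> joins_OOU Oo U e"
  shows "(\<Sum>v\<in>V. c2 Oo U v) \<le> 2 * card X"
proof -
  have "(\<Sum>v\<in>V. c2 Oo U v) \<le> (\<Sum>v\<in>Mv X. c2 Oo U v)"
    using assms finite_Mv by (intro c2_tot) auto
  also have "\<dots> = (\<Sum>e\<in>X. wt Oo U e)" using WS assms(1,2) by metis
  also have "\<dots> \<le> (\<Sum>e\<in>X. 2)" using assms(6) wt_le2 by (intro sum_mono) blast
  finally show ?thesis by simp
qed

lemma UB:
  assumes "mtch X" "finite X" "finite V" "Mv X \<subseteq> V" "\<forall>e\<in>X. wt Oo U e \<ge> 2"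
  shows "2 * card X \<le> (\<Sum>v\<in>V. c2 Oo U v)"
proof -
  have a: "2 * card X = (\<Sum>e\<in>X. 2)" by simp
  have b: "(\<Sum>e\<in>X. (2::nat)) \<le> (\<Sum>e\<in>X. wt Oo U e)" using assms(5) by (intro sum_mono) blast
  have c: "(\<Sum>e\<in>X. wt Oo U e) = (\<Sum>v\<in>Mv X. c2 Oo U v)" using WS assms(1,2) by metis
  have d: "(\<Sum>v\<in>Mv X. c2 Oo U v) \<le> (\<Sum>v\<in>V. c2 Oo U v)" using assms(3,4) by (intro sum_mono2) auto
  show ?thesis using a b c d by linarith
qed

lemma UB_eq:
  assumes "mtch X" "finite X" "finite V" "Mv X \<subseteq> V" "\<forall>e\<in>X. wt Oo U e \<ge> 2"
    "Oo \<union> U \<subseteq> V" and eq: "2 * card X = (\<Sum>v\<in>V. c2 Oo U v)"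
  shows "Oo \<union> U \<subseteq> Mv X \<and> (\<forall>e\<in>X. \<not> joins_OOU Oo U e)"
proof -
  have a: "2 * card X = (\<Sum>e\<in>X. 2)" by simp
  have b: "(\<Sum>e\<in>X. (2::nat)) \<le> (\<Sum>e\<in>X. wt Oo U e)" using assms(5) by (intro sum_mono) blast
  have c: "(\<Sum>e\<in>X. wt Oo U e) = (\<Sum>v\<in>Mv X. c2 Oo U v)" using WS assms(1,2) by metis
  have d: "(\<Sum>v\<in>Mv X. c2 Oo U v) \<le> (\<Sum>v\<in>V. c2 Oo U v)" using assms(3,4) by (intro sum_mono2) auto
  show ?thesis
  proof (intro conjI ballI subsetI)
    fix v assume v: "v \<in> Oo \<union> U"
    show "v \<in> Mv X"
    proof (rule ccontr)
      assume nv: "v \<notin> Mv X"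
      have vV: "v \<in> V" using v assms(6) by blast
      have fM: "finite (Mv X)" using assms(2) by (rule finite_Mv)
      have "(\<Sum>v\<in>Mv X. c2 Oo U v) + c2 Oo U v = (\<Sum>w\<in>insert v (Mv X). c2 Oo U w)"
        using fM nv by simp
      also have "\<dots> \<le> (\<Sum>v\<in>V. c2 Oo U v)" using assms(3,4) vV by (intro sum_mono2) auto
      finally have "(\<Sum>v\<in>Mv X. c2 Oo U v) < (\<Sum>v\<in>V. c2 Oo U v)"
        using v by (auto simp: c2_def split: if_splits)
      then show False using a b c eq by linarith
    qed
  next
    fix e assume e: "e \<in> X"
    show "\<not> joins_OOU Oo U e"
    proof
      assume "joins_OOU Oo U e"
      then have "wt Oo U e > 2" using wt_le2 by (metis not_le)
      then have "(\<Sum>e\<in>X. (2::nat)) < (\<Sum>e\<in>X. wt Oo U e)"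
        using assms(2,5) e by (intro sum_strict_mono_ex1) auto
      then show False using a c d eq by linarith
    qed
  qed
qed

lemma mm_max: assumes "finite F" shows "is_max_matching F (mm F)"
proof -
  define S where "S = {N. is_matching F N}"
  have fS: "finite S" unfolding S_def is_matching_def
    by (rule finite_subset[of _ "Pow F"]) (use assms in auto)
  have neS: "{} \<in> S" by (simp add: S_def is_matching_def)
  define c where "c = Max (card ` S)"
  have "c \<in> card ` S" unfolding c_def using fS neS by (intro Max_in) auto
  then obtain N where N: "N \<in> S" "card N = c" by auto
  have "\<forall>N'\<in>S. card N' \<le> c" unfolding c_def using fS by auto
  then have "is_max_matching F N" using N by (auto simp: is_max_matching_def S_def)
  then show ?thesis unfolding mm_def by (rule someI)
qed

locale bg =
  fixes V :: "('a + 'q) set" and F :: "('a \<times> 'q) set"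
  assumes finV: "finite V" and finF: "finite F" and FV: "\<And>e. e \<in> F \<Longrightarrow> vset e \<subseteq> V"
begin

abbreviation "N0 \<equiv> mm F"
abbreviation "Ev \<equiv> evens V F"
abbreviation "Od \<equiv> odds V F"
abbreviation "Uu \<equiv> unreach V F"
abbreviation "TT \<equiv> (\<Sum>v\<in>V. c2 Od Uu v)"

lemma N0max: "is_max_matching F N0" using finF by (rule mm_max)
lemma N0F: "N0 \<subseteq> F" and N0m: "mtch N0"
  using N0max by (auto simp: is_max_matching_def is_matching_iff)

lemma OUV: "Od \<union> Uu \<subseteq> V"
  by (auto simp: odds_def unreach_def reach_parity_def)

lemma adjV: "adj F u v \<Longrightarrow> v \<in> V"
  using FV by (auto simp: adj_iff)

lemma MvV: "X \<subseteq> F \<Longrightarrow> Mv X \<subseteq> V"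
  using FV by (auto simp: Mv_def)

lemma wt_ge2: assumes "e \<in> F" shows "wt Od Uu e \<ge> 2"
proof -
  obtain a q where e: "e = (a,q)" by (cases e)
  have aV: "Inl a \<in> V" and qV: "Inr q \<in> V" using FV[OF assms] e by (auto simp: vset_def)
  have ad: "adj F (Inl a) (Inr q)" using assms e by (auto simp: adj_def)
  have 1: "Inl a \<in> Ev \<Longrightarrow> Inr q \<in> Od"
    using S1[OF N0m N0F _ ad qV] by (simp add: evens_def odds_def)
  have 2: "Inr q \<in> Ev \<Longrightarrow> Inl a \<in> Od"
    using S1[OF N0m N0F _ adj_sym[OF ad] aV] by (simp add: evens_def odds_def)
  show ?thesis using 1 2 aV qV e
    by (auto simp: wt_def c2_def unreach_def)
qed

lemma UBF: "is_matching F X \<Longrightarrow> 2 * card X \<le> TT"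
proof -
  assume "is_matching F X"
  then have XF: "X \<subseteq> F" and m: "mtch X" by (auto simp: is_matching_iff)
  have "\<forall>e\<in>X. wt Od Uu e \<ge> 2" using XF wt_ge2 by blast
  then show ?thesis using UB[OF m _ finV MvV[OF XF]] finF XF finite_subset by blast
qed

lemma N0_LB: "TT \<le> 2 * card N0"
proof (rule LB)
  show "mtch N0" by (rule N0m)
  show "finite N0" using N0F finF finite_subset by blast
  show "finite V" by (rule finV)
  show "Od \<union> Uu \<subseteq> V" by (rule OUV)
  show "Od \<union> Uu \<subseteq> Mv N0"
  proof
    fix v assume v: "v \<in> Od \<union> Uu"
    show "v \<in> Mv N0"
    proof (cases "v \<in> Od")
      case True
      then show ?thesis using P1[OF finF N0max] by (auto simp: odds_def matched_iff)
    next
      case False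
      then have vU: "v \<in> Uu" using v by simp
      show ?thesis
      proof (rule ccontr)
        assume "v \<notin> Mv N0"
        then have "\<not> matched N0 v" by (simp add: matched_iff)
        moreover have "alt_path F N0 [v]" by (simp add: alt_path_def)
        moreover have "v \<in> V" using vU by (simp add: unreach_def)
        ultimately have "v \<in> Ev" by (auto simp: evens_def reach_parity_def)
        then show False using vU by (simp add: unreach_def)
      qed
    qed
  qed
  show "\<forall>e\<in>N0. \<not> joins_OOU Od Uu e"
  proof
    fix e assume e: "e \<in> N0"
    obtain a q where eq: "e = (a,q)" by (cases e)
    have ad: "adj N0 (Inl a) (Inr q)" using e eq by (auto simp: adj_def)
    have aV: "Inl a \<in> V" and qV: "Inr q \<in> V" using FV N0F e eq by (auto simp: vset_def)
    have 1: "Inl a \<in> Od \<Longrightarrow> Inr q \<in> Ev"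
      using P2[OF N0m N0F _ ad qV] by (simp add: evens_def odds_def)
    have 2: "Inr q \<in> Od \<Longrightarrow> Inl a \<in> Ev"
      using P2[OF N0m N0F _ adj_sym[OF ad] aV] by (simp add: evens_def odds_def)
    have 3: "\<And>x. x \<in> Ev \<Longrightarrow> x \<notin> Od"
      using P3[OF finF N0max] by (auto simp: evens_def odds_def)
    show "\<not> joins_OOU Od Uu e" using 1 2 3 eq
      by (auto simp: joins_OOU_def unreach_def)
  qed
qed

lemma max_val: "is_max_matching F N \<Longrightarrow> 2 * card N = TT"
proof -
  assume mx: "is_max_matching F N"
  have "card N0 \<le> card N" using mx N0max by (auto simp: is_max_matching_def)
  moreover have "2 * card N \<le> TT" using mx UBF by (auto simp: is_max_matching_def)
  ultimately show ?thesis using N0_LB by linarith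
qed

lemma max_struct:
  assumes "is_max_matching F N"
  shows "Od \<union> Uu \<subseteq> Mv N \<and> (\<forall>e\<in>N. \<not> joins_OOU Od Uu e)"
proof -
  have NF: "N \<subseteq> F" and m: "mtch N" using assms by (auto simp: is_max_matching_def is_matching_iff)
  have "\<forall>e\<in>N. wt Od Uu e \<ge> 2" using NF wt_ge2 by blast
  then show ?thesis
    using UB_eq[OF m _ finV MvV[OF NF] _ OUV max_val[OF assms]] NF finF finite_subset by blast
qed

end



lemma mtch_subset: "mtch N \<Longrightarrow> X \<subseteq> N \<Longrightarrow> mtch X"
  unfolding mtch_def by blast

lemma MA:
  assumes finF: "finite F" and NF: "N \<subseteq> F" and m: "mtch N"
  shows "N' \<subseteq> F \<Longrightarrow> mtch N' \<Longrightarrow> card N < card N' \<Longrightarrow>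
    \<exists>N''. N'' \<subseteq> F \<and> mtch N'' \<and> card N < card N'' \<and> Mv N \<subseteq> Mv N''"
proof (induction "card (N - N')" arbitrary: N' rule: less_induct)
  case less
  show ?case
  proof (cases "Mv N \<subseteq> Mv N'")
    case True thus ?thesis using less.prems by blast
  next
    case False
    then obtain v where v: "v \<in> Mv N" "v \<notin> Mv N'" by blast
    then obtain e where e: "e \<in> N" "v \<in> vset e" by (auto simp: Mv_def)
    have eN': "e \<notin> N'" using v e by (auto simp: Mv_def)
    define R where "R = {f \<in> N'. vset f \<inter> vset e \<noteq> {}}"
    define N1 where "N1 = insert e (N' - R)"
    have finN': "finite N'" using less.prems(1) finF finite_subset by blast
    have finR: "finite R" using finN' by (simp add: R_def)
    have R1: "card R \<le> 1"
    proof -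
      have "\<forall>f\<in>R. \<forall>g\<in>R. f = g"
      proof (intro ballI)
        fix f g assume f: "f \<in> R" and g: "g \<in> R"
        obtain w where w: "w \<in> vset f" "w \<in> vset e" using f by (auto simp: R_def)
        obtain w' where w': "w' \<in> vset g" "w' \<in> vset e" using g by (auto simp: R_def)
        have "w \<noteq> v" using w f v by (auto simp: Mv_def R_def)
        moreover have "w' \<noteq> v" using w' g v by (auto simp: Mv_def R_def)
        ultimately have "w = w'" using w w' e by (auto simp: vset_def)
        then show "f = g" using less.prems(2) f g w w' unfolding mtch_def R_def by blast
      qed
      then show ?thesis using finR by (simp add: card_le_Suc0_iff_eq)
    qed
    have RN': "R \<subseteq> N'" by (auto simp: R_def)
    have cN1: "card N' \<le> card N1"
    proof -
      have "card N1 = Suc (card (N' - R))" unfolding N1_def using finN' eN' by simp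
      also have "card (N' - R) = card N' - card R" using RN' finR by (simp add: card_Diff_subset)
      finally show ?thesis using R1 by simp
    qed
    have N1F: "N1 \<subseteq> F" using less.prems(1) e NF by (auto simp: N1_def)
    have mN1: "mtch N1"
      using less.prems(2) unfolding mtch_def N1_def R_def by (auto simp: Int_commute)
    have sub: "N - N1 \<subseteq> (N - N') - {e}"
    proof
      fix x assume x: "x \<in> N - N1"
      then have "x \<noteq> e" "x \<notin> N' - R" by (auto simp: N1_def)
      moreover have "x \<notin> R"
      proof
        assume "x \<in> R" then have "vset x \<inter> vset e \<noteq> {}" by (simp add: R_def)
        then have "x = e" using m x e unfolding mtch_def by blast
        then show False using \<open>x \<noteq> e\<close> by simp
      qed
      ultimately show "x \<in> (N - N') - {e}" using x by auto
    qed
    have finN: "finite N" using NF finF finite_subset by blast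
    have "card (N - N1) \<le> card ((N - N') - {e})" using sub finN by (intro card_mono) auto
    also have "\<dots> < card (N - N')" using e eN' finN by (intro psubset_card_mono) auto
    finally have lt: "card (N - N1) < card (N - N')" .
    have "card N < card N1" using less.prems(3) cN1 by linarith
    then show ?thesis using less.hyps[OF lt N1F mN1] by blast
  qed
qed

lemma LEX:
  fixes f g :: "nat \<Rightarrow> nat"
  assumes mn: "m \<le> n" and le: "\<forall>j\<le>m. (\<Sum>i\<in>{1..j}. g i) \<le> (\<Sum>i\<in>{1..j}. f i)"
    and lt: "(\<Sum>i\<in>{1..m}. g i) < (\<Sum>i\<in>{1..m}. f i)"
  shows "\<not> lex_le n f g"
proof -
  define D where "D = {i. 1 \<le> i \<and> i \<le> m \<and> f i \<noteq> g i}"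
  have "D \<noteq> {}"
  proof
    assume "D = {}"
    then have "\<forall>i\<in>{1..m}. f i = g i" by (auto simp: D_def)
    then have "(\<Sum>i\<in>{1..m}. g i) = (\<Sum>i\<in>{1..m}. f i)" by simp
    then show False using lt by simp
  qed
  define i0 where "i0 = (LEAST i. i \<in> D)"
  have i0D: "i0 \<in> D" unfolding i0_def using \<open>D \<noteq> {}\<close> by (metis LeastI_ex ex_in_conv)
  have i0min: "\<And>i. 1 \<le> i \<Longrightarrow> i < i0 \<Longrightarrow> f i = g i"
  proof -
    fix i assume "1 \<le> i" "i < i0"
    then have "i \<notin> D" unfolding i0_def using not_less_Least by blast
    moreover have "i \<le> m" using \<open>i < i0\<close> i0D by (auto simp: D_def)
    ultimately show "f i = g i" using \<open>1 \<le> i\<close> by (auto simp: D_def)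
  qed
  have i01: "1 \<le> i0" "i0 \<le> m" using i0D by (auto simp: D_def)
  have sumeq: "(\<Sum>i\<in>{1..i0-1}. g i) = (\<Sum>i\<in>{1..i0-1}. f i)"
    using i0min by (intro sum.cong) auto
  have split: "\<And>h::nat\<Rightarrow>nat. (\<Sum>i\<in>{1..i0}. h i) = (\<Sum>i\<in>{1..i0-1}. h i) + h i0"
  proof -
    fix h :: "nat \<Rightarrow> nat"
    have "{1..i0} = insert i0 {1..i0-1}" using i01 by auto
    moreover have "i0 \<notin> {1..i0-1}" using i01 by auto
    ultimately show "(\<Sum>i\<in>{1..i0}. h i) = (\<Sum>i\<in>{1..i0-1}. h i) + h i0" by simp
  qed
  have "(\<Sum>i\<in>{1..i0}. g i) \<le> (\<Sum>i\<in>{1..i0}. f i)" using le i01 by simp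
  then have "g i0 \<le> f i0" using split[of g] split[of f] sumeq by simp
  then have gf: "g i0 < f i0" using i0D by (auto simp: D_def)
  show ?thesis
    unfolding lex_le_def
  proof
    assume "(\<forall>i\<in>{1..n}. f i = g i) \<or> (\<exists>i\<in>{1..n}. f i < g i \<and> (\<forall>j\<in>{1..<i}. f j = g j))"
    then show False
    proof
      assume "\<forall>i\<in>{1..n}. f i = g i"
      then show False using gf i01 mn by auto
    next
      assume "\<exists>i\<in>{1..n}. f i < g i \<and> (\<forall>j\<in>{1..<i}. f j = g j)"
      then obtain i where i: "1 \<le> i" "f i < g i" "\<forall>j\<in>{1..<i}. f j = g j" by auto
      show False
      proof (cases "i < i0")
        case True then show False using i0min i by fastforce
      next
        case False
        show False
        proof (cases "i = i0")
          case True then show False using gf i by simp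
        next
          case False
          then have "i0 \<in> {1..<i}" using \<open>\<not> i < i0\<close> i01 by auto
          then show False using i gf by auto
        qed
      qed
    qed
  qed
qed

lemma ps_sum:
  fixes rank :: "'e \<Rightarrow> nat"
  assumes "finite X" "\<forall>e\<in>X. rank e \<ge> 1"
  shows "card {e\<in>X. rank e \<le> j} = (\<Sum>i\<in>{1..j}. card {e\<in>X. rank e = i})"
proof (induction j)
  case 0
  have "{e\<in>X. rank e \<le> 0} = {}" using assms(2) by force
  then have "card {e\<in>X. rank e \<le> 0} = 0" by (simp only: card.empty)
  then show ?case by simp
next
  case (Suc j)
  have "{e\<in>X. rank e \<le> Suc j} = {e\<in>X. rank e \<le> j} \<union> {e\<in>X. rank e = Suc j}" by auto
  then have "card {e\<in>X. rank e \<le> Suc j} = card {e\<in>X. rank e \<le> j} + card {e\<in>X. rank e = Suc j}"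
    using assms(1) by (simp add: card_Un_disjoint disjoint_iff)
  then show ?case using Suc by simp
qed

lemma rank_sum:
  fixes rank :: "'e \<Rightarrow> nat"
  assumes "finite X" "\<forall>e\<in>X. rank e \<in> {1..n}"
  shows "(\<Sum>e\<in>X. rank e) = (\<Sum>i\<in>{1..n}. i * card {e\<in>X. rank e = i})"
proof -
  have "(\<Sum>e\<in>X. rank e) = (\<Sum>i\<in>{1..n}. \<Sum>e\<in>{e\<in>X. rank e = i}. rank e)"
    using assms by (intro sum.group[symmetric]) auto
  also have "\<dots> = (\<Sum>i\<in>{1..n}. i * card {e\<in>X. rank e = i})"
    by (intro sum.cong refl) simp
  finally show ?thesis .
qed



lemma incident_vset: "incident S e \<longleftrightarrow> vset e \<inter> S \<noteq> {}"
  by (auto simp: incident_def vset_def)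

locale inst =
  fixes A :: "'a set" and P :: "'p set" and E :: "('a \<times> 'p) set"
    and rk :: "'a \<Rightarrow> 'p \<Rightarrow> nat" and r :: nat
  assumes finA: "finite A" and finP: "finite P" and EAP: "E \<subseteq> A \<times> P"
    and rkb: "\<forall>(a, p) \<in> E. 1 \<le> rk a p \<and> rk a p \<le> r"
begin

abbreviation "VV \<equiv> ext_V A P"
abbreviation "EE \<equiv> ext_E A E"
definition rank :: "('a \<times> ('p + 'a)) \<Rightarrow> nat" where "rank e = ext_rank r rk (fst e) (snd e)"
abbreviation "Fk k \<equiv> fst (irving A P E rk r k)"
abbreviation "Dk k \<equiv> snd (irving A P E rk r k)"
abbreviation "Ok k \<equiv> odds VV (Fk k)"
abbreviation "Uk k \<equiv> unreach VV (Fk k)"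
abbreviation "TTk k \<equiv> (\<Sum>v\<in>VV. c2 (Ok k) (Uk k) v)"

lemma finVV: "finite VV"
  using finA finP by (simp add: ext_V_def ext_posts_def)

lemma finEE: "finite EE"
proof -
  have "EE \<subseteq> A \<times> (Inl ` P \<union> Inr ` A)" using EAP by (auto simp: ext_E_def)
  moreover have "finite (A \<times> (Inl ` P \<union> Inr ` A))" using finA finP by simp
  ultimately show ?thesis by (rule finite_subset)
qed

lemma EEV: "e \<in> EE \<Longrightarrow> vset e \<subseteq> VV"
  using EAP by (auto simp: ext_E_def ext_V_def ext_posts_def vset_def)

lemma rankEE: "e \<in> EE \<Longrightarrow> 1 \<le> rank e \<and> rank e \<le> Suc r"
  using rkb by (auto simp: ext_E_def rank_def ext_rank_def)

lemma rank_edges_eq: "rank_edges A E rk r i = {e \<in> EE. rank e = i}"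
  by (simp add: rank_edges_def rank_def)

lemma FSuc: "Fk (Suc k) = {e \<in> Fk k. \<not> joins_OOU (Ok k) (Uk k) e} \<union>
   {e \<in> rank_edges A E rk r (k + 2). \<not> incident (Dk k \<union> Ok k \<union> Uk k) e}"
  by (simp add: Let_def)

lemma DSuc: "Dk (Suc k) = Dk k \<union> Ok k \<union> Uk k"
  by (simp add: Let_def)

lemma St1: "Fk k \<subseteq> EE \<and> (\<forall>e\<in>Fk k. rank e \<le> Suc k)"
proof (induction k)
  case 0 show ?case by (auto simp: rank_edges_eq)
next
  case (Suc k) then show ?case unfolding FSuc by (auto simp: rank_edges_eq)
qed

lemma St2: "Dk k = (\<Union>j<k. Ok j \<union> Uk j)"
proof (induction k)
  case 0 show ?case by simp
next
  case (Suc k) then show ?case unfolding DSuc by (auto simp: lessThan_Suc)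
qed

lemma St3: "e \<in> Fk k \<Longrightarrow> j < k \<Longrightarrow>
  (rank e \<le> Suc j \<longrightarrow> e \<in> Fk j \<and> \<not> joins_OOU (Ok j) (Uk j) e) \<and>
  (Suc j < rank e \<longrightarrow> \<not> incident (Ok j \<union> Uk j) e)"
proof (induction k arbitrary: e)
  case 0 thus ?case by simp
next
  case (Suc k)
  from Suc.prems(1) consider (a) "e \<in> Fk k" "\<not> joins_OOU (Ok k) (Uk k) e"
    | (b) "e \<in> rank_edges A E rk r (k + 2)" "\<not> incident (Dk k \<union> Ok k \<union> Uk k) e"
    unfolding FSuc by blast
  then show ?case
  proof cases
    case a
    show ?thesis
    proof (cases "j = k")
      case True thus ?thesis using a St1 by fastforce
    next
      case False then have "j < k" using Suc.prems by simp
      thus ?thesis using Suc.IH a by blast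
    qed
  next
    case b
    have re: "rank e = k + 2" using b by (simp add: rank_edges_eq)
    have "Ok j \<union> Uk j \<subseteq> Dk k \<union> Ok k \<union> Uk k" using St2[of k] Suc.prems(2)
      by (cases "j = k") auto
    then show ?thesis using re b Suc.prems by (auto simp: incident_def)
  qed
qed

lemma Red: "e \<in> reduced A P E rk r \<Longrightarrow> j \<le> r \<Longrightarrow>
  (rank e \<le> Suc j \<longrightarrow> e \<in> Fk j \<and> \<not> joins_OOU (Ok j) (Uk j) e) \<and>
  (Suc j < rank e \<longrightarrow> \<not> incident (Ok j \<union> Uk j) e)"
proof -
  assume e: "e \<in> reduced A P E rk r" and j: "j \<le> r"
  have e1: "e \<in> Fk r" "\<not> joins_OOU (Ok r) (Uk r) e" using e by (auto simp: reduced_def Let_def)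
  show ?thesis
  proof (cases "j = r")
    case True thus ?thesis using e1 St1 by fastforce
  next
    case False then have "j < r" using j by simp
    then show ?thesis using St3[OF e1(1)] by blast
  qed
qed

lemma redEE: "reduced A P E rk r \<subseteq> EE"
  using St1[of r] by (auto simp: reduced_def Let_def)

lemma bgk: "bg VV (Fk k)"
  using finVV finEE St1[of k] EEV by unfold_locales (auto intro: finite_subset)

end



lemma Mv_mono: "X \<subseteq> Y \<Longrightarrow> Mv X \<subseteq> Mv Y"
  by (auto simp: Mv_def)

context inst begin

definition Mle :: "('a \<times> ('p + 'a)) set \<Rightarrow> nat \<Rightarrow> ('a \<times> ('p + 'a)) set" where
  "Mle M i = {e\<in>M. rank e \<le> i}"

lemma sig_eq: "signature r rk X i = card {e \<in> X. rank e = i}"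
  by (simp add: signature_def rank_def)

lemma LEXZ:
  assumes "X \<subseteq> EE" "Y \<subseteq> EE" "m \<le> Suc r"
    "\<forall>j\<le>m. card (Mle Y j) \<le> card (Mle X j)" "card (Mle Y m) < card (Mle X m)"
  shows "\<not> lex_le (Suc r) (signature r rk X) (signature r rk Y)"
proof -
  have fX: "finite X" and fY: "finite Y" using assms(1,2) finEE finite_subset by blast+
  have rX: "\<forall>e\<in>X. rank e \<ge> 1" and rY: "\<forall>e\<in>Y. rank e \<ge> 1" using assms(1,2) rankEE by blast+
  have psX: "\<And>j. card (Mle X j) = (\<Sum>i\<in>{1..j}. signature r rk X i)"
    unfolding Mle_def sig_eq by (rule ps_sum[OF fX rX])
  have psY: "\<And>j. card (Mle Y j) = (\<Sum>i\<in>{1..j}. signature r rk Y i)"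
    unfolding Mle_def sig_eq by (rule ps_sum[OF fY rY])
  show ?thesis
    by (rule LEX[OF assms(3)]) (use assms(4,5) psX psY in auto)
qed

lemma main_ind:
  assumes RM: "rank_maximal A E rk r M"
  shows "k \<le> r \<Longrightarrow> Mle M (Suc k) \<subseteq> Fk k \<and> is_max_matching (Fk k) (Mle M (Suc k))"
proof (induction k rule: less_induct)
  case (less k)
  have IH: "\<And>j. j < k \<Longrightarrow> Mle M (Suc j) \<subseteq> Fk j \<and> is_max_matching (Fk j) (Mle M (Suc j))"
    using less by simp
  have str: "\<And>j. j < k \<Longrightarrow> Ok j \<union> Uk j \<subseteq> Mv (Mle M (Suc j)) \<and>
      (\<forall>e\<in>Mle M (Suc j). \<not> joins_OOU (Ok j) (Uk j) e)"
    using bg.max_struct[OF bgk] IH by blast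
  have val: "\<And>j. j < k \<Longrightarrow> 2 * card (Mle M (Suc j)) = TTk j"
    using bg.max_val[OF bgk] IH by blast
  have MEE: "M \<subseteq> EE" and mM: "mtch M"
    using RM by (auto simp: rank_maximal_def is_matching_iff)
  have cov: "rank f \<le> Suc j" if j: "j < k" and w: "w \<in> Ok j \<union> Uk j" and f: "f \<in> M" "w \<in> vset f" for j w f
  proof -
    obtain g where g: "g \<in> Mle M (Suc j)" "w \<in> vset g"
      using str[OF j] w by (auto simp: Mv_def)
    then have "g \<in> M" by (simp add: Mle_def)
    then have "f = g" using mM f g unfolding mtch_def by blast
    then show ?thesis using g by (simp add: Mle_def)
  qed
  have sub: "Mle M (Suc k) \<subseteq> Fk k"
  proof (cases k)
    case 0
    show ?thesis
    proof
      fix e assume "e \<in> Mle M (Suc k)"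
      then have "e \<in> EE" "rank e \<le> 1" using MEE 0 by (auto simp: Mle_def)
      then have "rank e = 1" using rankEE by fastforce
      then show "e \<in> Fk k" using \<open>e \<in> EE\<close> 0 by (simp add: rank_edges_eq)
    qed
  next
    case (Suc k')
    show ?thesis
    proof
      fix e assume e: "e \<in> Mle M (Suc k)"
      show "e \<in> Fk k"
      proof (cases "rank e \<le> Suc k'")
        case True
        then have "e \<in> Mle M (Suc k')" using e by (simp add: Mle_def)
        then have "e \<in> Fk k'" "\<not> joins_OOU (Ok k') (Uk k') e"
          using IH[of k'] str[of k'] Suc by auto
        then show ?thesis unfolding Suc FSuc by blast
      next
        case False
        then have re: "rank e = k' + 2" using e Suc by (simp add: Mle_def)
        have eM: "e \<in> M" using e by (simp add: Mle_def)
        have "e \<in> rank_edges A E rk r (k' + 2)" using re eM MEE by (auto simp: rank_edges_eq)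
        moreover have "\<not> incident (Dk k' \<union> Ok k' \<union> Uk k') e"
        proof
          assume "incident (Dk k' \<union> Ok k' \<union> Uk k') e"
          then obtain w where w: "w \<in> vset e" "w \<in> Dk k' \<union> Ok k' \<union> Uk k'"
            by (auto simp: incident_vset)
          then obtain j where j: "j \<le> k'" "w \<in> Ok j \<union> Uk j"
          proof -
            assume H: "\<And>j. j \<le> k' \<Longrightarrow> w \<in> Ok j \<union> Uk j \<Longrightarrow> thesis"
            show thesis
            proof (cases "w \<in> Dk k'")
              case True
              then obtain j where "j < k'" "w \<in> Ok j \<union> Uk j" using St2[of k'] by auto
              then show thesis using H[of j] by simp
            next
              case False
              then show thesis using H[of k'] w(2) by simp
            qed
          qed
          then have "rank e \<le> Suc j" using cov[of j w e] Suc w eM by simp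
          then show False using re j by simp
        qed
        ultimately show ?thesis unfolding Suc FSuc by blast
      qed
    qed
  qed
  have mat: "is_matching (Fk k) (Mle M (Suc k))"
    using sub mtch_subset[OF mM] by (auto simp: is_matching_iff Mle_def)
  have "is_max_matching (Fk k) (Mle M (Suc k))"
  proof (rule ccontr)
    assume "\<not> is_max_matching (Fk k) (Mle M (Suc k))"
    then obtain N' where N': "is_matching (Fk k) N'" "card (Mle M (Suc k)) < card N'"
      using mat by (auto simp: is_max_matching_def not_le)
    have finF: "finite (Fk k)" using St1[of k] finEE finite_subset by blast
    obtain N'' where N'': "N'' \<subseteq> Fk k" "mtch N''" "card (Mle M (Suc k)) < card N''"
      "Mv (Mle M (Suc k)) \<subseteq> Mv N''"
    proof -
      have "N' \<subseteq> Fk k" "mtch N'" using N'(1) by (auto simp: is_matching_iff)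
      then have "\<exists>N''. N'' \<subseteq> Fk k \<and> mtch N'' \<and> card (Mle M (Suc k)) < card N'' \<and>
          Mv (Mle M (Suc k)) \<subseteq> Mv N''"
        using MA[OF finF sub mtch_subset[OF mM]] N'(2) by (auto simp: Mle_def)
      then show ?thesis using that by blast
    qed
    define LR :: "('a \<times> ('p + 'a)) set" where "LR = {(a, Inr a) | a. a \<in> A \<and> Inl a \<notin> Mv N''}"
    define Z where "Z = N'' \<union> LR"
    have N''EE: "N'' \<subseteq> EE" using N''(1) St1[of k] by blast
    have LREE: "LR \<subseteq> EE" by (auto simp: LR_def ext_E_def)
    have ZEE: "Z \<subseteq> EE" using N''EE LREE by (simp add: Z_def)
    have mZ: "mtch Z"
      unfolding mtch_def
    proof (intro ballI impI)
      fix e e' assume e: "e \<in> Z" and e': "e' \<in> Z" and i: "vset e \<inter> vset e' \<noteq> {}"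
      have cross: "x = y" if x: "x \<in> N''" and y: "y \<in> LR" and xy: "vset x \<inter> vset y \<noteq> {}" for x y
      proof -
        obtain a where a: "y = (a, Inr a)" "Inl a \<notin> Mv N''" using y by (auto simp: LR_def)
        have "fst x = a \<or> snd x = Inr a" using xy a by (auto simp: vset_def)
        moreover have "fst x \<noteq> a" using x a(2) by (auto simp: Mv_def vset_def)
        moreover have "snd x = Inr a \<Longrightarrow> fst x = a"
          using x N''EE by (auto simp: ext_E_def)
        ultimately show ?thesis by blast
      qed
      show "e = e'"
      proof (cases "e \<in> N''")
        case True
        show ?thesis
        proof (cases "e' \<in> N''")
          case True then show ?thesis using N''(2) \<open>e \<in> N''\<close> i unfolding mtch_def by blast
        next
          case False then show ?thesis using cross[OF \<open>e \<in> N''\<close> _ i] e' by (auto simp: Z_def)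
        qed
      next
        case False
        then have eL: "e \<in> LR" using e by (simp add: Z_def)
        show ?thesis
        proof (cases "e' \<in> N''")
          case True then show ?thesis using cross[OF True eL] i by (auto simp: Int_commute)
        next
          case False then have "e' \<in> LR" using e' by (simp add: Z_def)
          then show ?thesis using eL i by (auto simp: LR_def vset_def)
        qed
      qed
    qed
    have Zmat: "is_matching EE Z" using ZEE mZ by (simp add: is_matching_iff)
    have lexZ: "lex_le (Suc r) (signature r rk Z) (signature r rk M)"
      using RM Zmat by (simp add: rank_maximal_def)
    have finZ: "finite Z" using ZEE finEE finite_subset by blast
    have finN'': "finite N''" using N''EE finEE finite_subset by blast
    have step: "card (Mle M (Suc j')) \<le> card (Mle Z (Suc j'))" if j': "j' < k" for j'
    proof -
      define X where "X = {e\<in>N''. rank e \<le> Suc j'}"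
      have XZ: "X \<subseteq> Mle Z (Suc j')" by (auto simp: X_def Mle_def Z_def)
      have finX: "finite X" using finN'' by (simp add: X_def)
      have "TTk j' \<le> 2 * card X"
      proof (rule LB)
        show "mtch X" using mtch_subset[OF N''(2)] by (auto simp: X_def)
        show "finite X" by fact
        show "finite VV" by (rule finVV)
        show "Ok j' \<union> Uk j' \<subseteq> VV" by (rule bg.OUV[OF bgk])
        show "Ok j' \<union> Uk j' \<subseteq> Mv X"
        proof
          fix w assume w: "w \<in> Ok j' \<union> Uk j'"
          have "w \<in> Mv (Mle M (Suc j'))" using str[OF j'] w by blast
          also have "\<dots> \<subseteq> Mv (Mle M (Suc k))" using j' by (intro Mv_mono) (auto simp: Mle_def)
          also have "\<dots> \<subseteq> Mv N''" by (rule N''(4))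
          finally obtain f where f: "f \<in> N''" "w \<in> vset f" by (auto simp: Mv_def)
          have "\<not> Suc j' < rank f"
          proof
            assume "Suc j' < rank f"
            then have "\<not> incident (Ok j' \<union> Uk j') f" using St3[of f k j'] f N''(1) j' by blast
            then show False using f w by (auto simp: incident_vset)
          qed
          then have "f \<in> X" using f by (simp add: X_def)
          then show "w \<in> Mv X" using f by (auto simp: Mv_def)
        qed
        show "\<forall>e\<in>X. \<not> joins_OOU (Ok j') (Uk j') e"
          using St3[of _ k j'] N''(1) j' by (auto simp: X_def)
      qed
      then have "card (Mle M (Suc j')) \<le> card X" using val[OF j'] by linarith
      also have "\<dots> \<le> card (Mle Z (Suc j'))" using XZ finZ by (intro card_mono) (auto simp: Mle_def)
      finally show ?thesis .
    qed
    have top: "card (Mle M (Suc k)) < card (Mle Z (Suc k))"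
    proof -
      have "N'' \<subseteq> Mle Z (Suc k)" using N''(1) St1[of k] by (auto simp: Mle_def Z_def)
      then have "card N'' \<le> card (Mle Z (Suc k))" using finZ by (intro card_mono) (auto simp: Mle_def)
      then show ?thesis using N''(3) by linarith
    qed
    have allj: "\<forall>j\<le>Suc k. card (Mle M j) \<le> card (Mle Z j)"
    proof (intro allI impI)
      fix j assume j: "j \<le> Suc k"
      show "card (Mle M j) \<le> card (Mle Z j)"
      proof (cases j)
        case 0
        have "Mle M 0 = {}" using MEE rankEE by (force simp: Mle_def)
        then show ?thesis using 0 by simp
      next
        case (Suc j')
        show ?thesis
        proof (cases "j' < k")
          case True then show ?thesis using step Suc by simp
        next
          case False then have "j' = k" using j Suc by simp
          then show ?thesis using top Suc by simp
        qed
      qed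
    qed
    have "\<not> lex_le (Suc r) (signature r rk Z) (signature r rk M)"
      by (rule LEXZ[OF ZEE MEE]) (use less.prems allj top in auto)
    then show False using lexZ by simp
  qed
  then show ?case using sub by simp
qed

end



lemma Mv_Un: "Mv (X \<union> Y) = Mv X \<union> Mv Y" by (auto simp: Mv_def)

lemma Mv_img: "Mv ((\<lambda>j. (f j, g j)) ` I) = Inl ` f ` I \<union> Inr ` g ` I"
  by (auto simp: Mv_def vset_def)

context inst begin

lemma final:
  assumes RM: "rank_maximal A E rk r M" and cyc: "sw_cycle A P E rk r M cs"
  shows "cycle_weight r rk M cs = 0"
proof -
  have MEE: "M \<subseteq> EE" and mM: "mtch M"
    using RM by (auto simp: rank_maximal_def is_matching_iff)
  have finM: "finite M" using MEE finEE finite_subset by blast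
  define n where "n = length cs"
  have n0: "n > 0" and dcs: "distinct cs" using cyc by (auto simp: sw_cycle_def n_def)
  define nx where "nx j = (j+1) mod n" for j
  have swe: "\<And>j. j < n \<Longrightarrow> sw_edge A P E rk r M (cs!j) (cs!(nx j))"
    using cyc by (auto simp: sw_cycle_def n_def nx_def)
  have nxlt: "\<And>j. nx j < n" using n0 by (simp add: nx_def)
  have nxinj: "inj_on nx {..<n}"
  proof (rule inj_onI)
    fix i j assume i: "i \<in> {..<n}" and j: "j \<in> {..<n}" and eq: "nx i = nx j"
    have ci: "nx i = (if Suc i = n then 0 else Suc i)" using i by (auto simp: nx_def)
    have cj: "nx j = (if Suc j = n then 0 else Suc j)" using j by (auto simp: nx_def)
    show "i = j" using eq ci cj by (auto split: if_splits)
  qed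
  have nximg: "nx ` {..<n} = {..<n}"
    using nxinj nxlt by (intro endo_inj_surj) auto
  define aa where "aa j = partner M (cs!j)" for j
  have puniq: "partner M p = a" if "(a, p) \<in> M" for a p
    unfolding partner_def
  proof (rule the_equality)
    show "(a, p) \<in> M" by fact
    fix a' assume "(a', p) \<in> M"
    then show "a' = a" using mM that unfolding mtch_def vset_inter by fastforce
  qed
  have inMR: "(aa j, cs!j) \<in> M \<and> (aa j, cs!(nx j)) \<in> reduced A P E rk r" if jn: "j < n" for j
  proof -
    obtain a where "(a, cs!j) \<in> M" "(a, cs!(nx j)) \<in> reduced A P E rk r"
      using swe[OF jn] by (auto simp: sw_edge_def)
    then show ?thesis using puniq by (simp add: aa_def)
  qed
  define Cold where "Cold = (\<lambda>j. (aa j, cs!j)) ` {..<n}"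
  define Cnew where "Cnew = (\<lambda>j. (aa j, cs!(nx j))) ` {..<n}"
  define M' where "M' = (M - Cold) \<union> Cnew"
  have ColdM: "Cold \<subseteq> M" using inMR by (auto simp: Cold_def)
  have CnewR: "Cnew \<subseteq> reduced A P E rk r" using inMR by (auto simp: Cnew_def)
  have CnewEE: "Cnew \<subseteq> EE" using CnewR redEE by blast
  have k3: "vset (aa j, cs!(nx j)) \<inter> vset e' = {}" if j: "j < n" and e': "e' \<in> M - Cold" for j e'
  proof (rule ccontr)
    assume "vset (aa j, cs!(nx j)) \<inter> vset e' \<noteq> {}"
    then have "aa j = fst e' \<or> cs!(nx j) = snd e'" by (simp add: vset_inter)
    then show False
    proof
      assume "aa j = fst e'"
      then have "vset (aa j, cs!j) \<inter> vset e' \<noteq> {}" by (simp add: vset_inter)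
      then have "e' = (aa j, cs!j)" using mM inMR[OF j] e' unfolding mtch_def by blast
      then show False using e' j by (auto simp: Cold_def)
    next
      assume "cs!(nx j) = snd e'"
      then have "vset (aa (nx j), cs!(nx j)) \<inter> vset e' \<noteq> {}" by (simp add: vset_inter)
      then have "e' = (aa (nx j), cs!(nx j))" using mM inMR[OF nxlt] e' unfolding mtch_def by blast
      then show False using e' nxlt by (auto simp: Cold_def)
    qed
  qed
  have disj: "Cnew \<inter> (M - Cold) = {}"
  proof (rule ccontr)
    assume "Cnew \<inter> (M - Cold) \<noteq> {}"
    then obtain j where j: "j < n" "(aa j, cs!(nx j)) \<in> M - Cold" by (auto simp: Cnew_def)
    then show False using k3[OF j] by (simp add: vset_def)
  qed
  have mM': "mtch M'"
    unfolding mtch_def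
  proof (intro ballI impI)
    fix e e' assume e: "e \<in> M'" and e': "e' \<in> M'" and i: "vset e \<inter> vset e' \<noteq> {}"
    show "e = e'"
    proof (cases "e \<in> Cnew")
      case True
      then obtain j where j: "j < n" "e = (aa j, cs!(nx j))" by (auto simp: Cnew_def)
      show ?thesis
      proof (cases "e' \<in> Cnew")
        case True
        then obtain i' where i': "i' < n" "e' = (aa i', cs!(nx i'))" by (auto simp: Cnew_def)
        have "aa j = aa i' \<or> cs!(nx j) = cs!(nx i')" using i j i' by (simp add: vset_inter)
        then have "j = i'"
        proof
          assume "aa j = aa i'"
          then have "vset (aa j, cs!j) \<inter> vset (aa i', cs!i') \<noteq> {}" by (simp add: vset_inter)
          then have "(aa j, cs!j) = (aa i', cs!i')" using mM inMR j i' unfolding mtch_def by blast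
          then show "j = i'" using dcs j i' by (simp add: n_def nth_eq_iff_index_eq)
        next
          assume "cs!(nx j) = cs!(nx i')"
          then have "nx j = nx i'" using dcs nxlt by (simp add: n_def nth_eq_iff_index_eq)
          then show "j = i'" using nxinj j i' by (auto dest: inj_onD)
        qed
        then show ?thesis using j i' by simp
      next
        case False
        then have "e' \<in> M - Cold" using e' by (simp add: M'_def)
        then show ?thesis using k3[OF j(1)] j i by simp
      qed
    next
      case False
      then have eM: "e \<in> M - Cold" using e by (simp add: M'_def)
      show ?thesis
      proof (cases "e' \<in> Cnew")
        case True
        then obtain j where j: "j < n" "e' = (aa j, cs!(nx j))" by (auto simp: Cnew_def)
        then show ?thesis using k3[OF j(1) eM] i by (simp add: Int_commute)
      next
        case False
        then have "e' \<in> M" using e' by (simp add: M'_def)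
        then show ?thesis using mM eM i unfolding mtch_def by blast
      qed
    qed
  qed
  have MvC: "Mv Cnew = Mv Cold"
  proof -
    have "(\<lambda>j. cs!(nx j)) ` {..<n} = (\<lambda>j. cs!j) ` {..<n}"
    proof -
      have "(\<lambda>j. cs!(nx j)) ` {..<n} = (\<lambda>j. cs!j) ` (nx ` {..<n})" by (simp add: image_image)
      then show ?thesis using nximg by simp
    qed
    then show ?thesis unfolding Cnew_def Cold_def Mv_img by simp
  qed
  have MvM': "Mv M' = Mv M"
  proof -
    have "(M - Cold) \<union> Cold = M" using ColdM by blast
    then have "Mv M = Mv ((M - Cold) \<union> Cold)" by simp
    then show ?thesis unfolding M'_def Mv_Un using MvC by simp
  qed
  have M'EE: "M' \<subseteq> EE" using MEE CnewEE by (auto simp: M'_def)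
  have finM': "finite M'" using M'EE finEE finite_subset by blast
  have k7: "card (Mle M' (Suc k)) = card (Mle M (Suc k))" if k: "k \<le> r" for k
  proof -
    have mi: "Mle M (Suc k) \<subseteq> Fk k" "is_max_matching (Fk k) (Mle M (Suc k))"
      using main_ind[OF RM k] by auto
    have st: "Ok k \<union> Uk k \<subseteq> Mv (Mle M (Suc k))" "\<forall>e\<in>Mle M (Suc k). \<not> joins_OOU (Ok k) (Uk k) e"
      using bg.max_struct[OF bgk mi(2)] by auto
    have vl: "2 * card (Mle M (Suc k)) = TTk k" using bg.max_val[OF bgk mi(2)] .
    define X where "X = Mle M' (Suc k)"
    have XF: "X \<subseteq> Fk k"
    proof
      fix e assume e: "e \<in> X"
      show "e \<in> Fk k"
      proof (cases "e \<in> Cnew")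
        case True then show ?thesis using Red[of e k] CnewR k e by (auto simp: X_def Mle_def)
      next
        case False then have "e \<in> Mle M (Suc k)" using e by (auto simp: X_def Mle_def M'_def)
        then show ?thesis using mi(1) by blast
      qed
    qed
    have mX: "mtch X" using mtch_subset[OF mM'] by (auto simp: X_def Mle_def)
    have finX: "finite X" using finM' by (simp add: X_def Mle_def)
    have "2 * card X \<le> TTk k" using bg.UBF[OF bgk] XF mX by (simp add: is_matching_iff)
    moreover have "TTk k \<le> 2 * card X"
    proof (rule LB[OF mX finX finVV bg.OUV[OF bgk]])
      show "Ok k \<union> Uk k \<subseteq> Mv X"
      proof
        fix w assume w: "w \<in> Ok k \<union> Uk k"
        then have "w \<in> Mv (Mle M (Suc k))" using st(1) by blast
        then obtain g where g: "g \<in> Mle M (Suc k)" "w \<in> vset g" by (auto simp: Mv_def)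
        have "w \<in> Mv M'" using MvM' g by (auto simp: Mv_def Mle_def)
        then obtain f where f: "f \<in> M'" "w \<in> vset f" by (auto simp: Mv_def)
        have "f \<in> X"
        proof (cases "f \<in> Cnew")
          case True
          have "\<not> Suc k < rank f"
          proof
            assume "Suc k < rank f"
            then have "\<not> incident (Ok k \<union> Uk k) f" using Red[of f k] CnewR True k by blast
            then show False using f w by (auto simp: incident_vset)
          qed
          then show ?thesis using f by (simp add: X_def Mle_def)
        next
          case False
          then have "f \<in> M" using f by (simp add: M'_def)
          moreover have "g \<in> M" using g by (simp add: Mle_def)
          ultimately have "f = g" using mM f g unfolding mtch_def by blast
          then show ?thesis using f g by (simp add: X_def Mle_def)
        qed
        then show "w \<in> Mv X" using f by (auto simp: Mv_def)
      qed
      show "\<forall>e\<in>X. \<not> joins_OOU (Ok k) (Uk k) e"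
      proof
        fix e assume e: "e \<in> X"
        show "\<not> joins_OOU (Ok k) (Uk k) e"
        proof (cases "e \<in> Cnew")
          case True then show ?thesis using Red[of e k] CnewR k e by (auto simp: X_def Mle_def)
        next
          case False then have "e \<in> Mle M (Suc k)" using e by (auto simp: X_def Mle_def M'_def)
          then show ?thesis using st(2) by blast
        qed
      qed
    qed
    ultimately show ?thesis using vl by (simp add: X_def)
  qed
  have Mle0: "Mle X 0 = {}" if "X \<subseteq> EE" for X using that rankEE by (force simp: Mle_def)
  have psall: "card (Mle M' j) = card (Mle M j)" if "j \<le> Suc r" for j
  proof (cases j)
    case 0 then show ?thesis using Mle0 MEE M'EE by simp
  next
    case (Suc k) then show ?thesis using k7 that by simp
  qed
  have sigsplit: "card (Mle X (Suc j)) = card (Mle X j) + card {e\<in>X. rank e = Suc j}"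
    if "finite X" for X j
  proof -
    have "Mle X (Suc j) = Mle X j \<union> {e\<in>X. rank e = Suc j}" by (auto simp: Mle_def)
    then show ?thesis using that by (simp add: card_Un_disjoint Mle_def disjoint_iff)
  qed
  have sigeq: "card {e\<in>M'. rank e = i} = card {e\<in>M. rank e = i}" if "i \<in> {1..Suc r}" for i
  proof -
    have "i \<noteq> 0" using that by simp
    then obtain j where j: "i = Suc j" by (cases i) auto
    then have "j \<le> Suc r" "Suc j \<le> Suc r" using that by auto
    then show ?thesis using sigsplit[OF finM', of j] sigsplit[OF finM, of j] psall j by simp
  qed
  have rsum: "(\<Sum>e\<in>M'. rank e) = (\<Sum>e\<in>M. rank e)"
  proof -
    have r1: "\<forall>e\<in>M'. rank e \<in> {1..Suc r}" using M'EE rankEE by auto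
    have r2: "\<forall>e\<in>M. rank e \<in> {1..Suc r}" using MEE rankEE by auto
    have "(\<Sum>e\<in>M'. rank e) = (\<Sum>i\<in>{1..Suc r}. i * card {e\<in>M'. rank e = i})"
      by (rule rank_sum[OF finM' r1])
    also have "\<dots> = (\<Sum>i\<in>{1..Suc r}. i * card {e\<in>M. rank e = i})"
      using sigeq by simp
    also have "\<dots> = (\<Sum>e\<in>M. rank e)"
      by (rule rank_sum[OF finM r2, symmetric])
    finally show ?thesis .
  qed
  have finCn: "finite Cnew" by (simp add: Cnew_def)
  have "(\<Sum>e\<in>M'. rank e) = (\<Sum>e\<in>M - Cold. rank e) + (\<Sum>e\<in>Cnew. rank e)"
    unfolding M'_def using finM finCn disj by (intro sum.union_disjoint) auto
  moreover have "(\<Sum>e\<in>M. rank e) = (\<Sum>e\<in>M - Cold. rank e) + (\<Sum>e\<in>Cold. rank e)"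
    using ColdM finM by (metis sum.subset_diff)
  ultimately have eqC: "(\<Sum>e\<in>Cnew. rank e) = (\<Sum>e\<in>Cold. rank e)" using rsum by simp
  have injO: "inj_on (\<lambda>j. (aa j, cs!j)) {..<n}"
  proof (rule inj_onI)
    fix i j assume i: "i \<in> {..<n}" and j: "j \<in> {..<n}" and eq: "(aa i, cs!i) = (aa j, cs!j)"
    then show "i = j" using dcs by (simp add: n_def nth_eq_iff_index_eq)
  qed
  have sC: "(\<Sum>e\<in>Cold. rank e) = (\<Sum>j<n. rank (aa j, cs!j))"
    unfolding Cold_def using injO by (simp add: sum.reindex)
  have injN: "inj_on (\<lambda>j. (aa j, cs!(nx j))) {..<n}"
  proof (rule inj_onI)
    fix i j assume i: "i \<in> {..<n}" and j: "j \<in> {..<n}" and eq: "(aa i, cs!(nx i)) = (aa j, cs!(nx j))"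
    then have "nx i = nx j" using dcs nxlt by (simp add: n_def nth_eq_iff_index_eq)
    then show "i = j" using nxinj i j by (auto dest: inj_onD)
  qed
  have sN: "(\<Sum>e\<in>Cnew. rank e) = (\<Sum>j<n. rank (aa j, cs!(nx j)))"
    unfolding Cnew_def using injN by (simp add: sum.reindex)
  have "cycle_weight r rk M cs =
      (\<Sum>j<n. int (rank (aa j, cs!(nx j))) - int (rank (aa j, cs!j)))"
    unfolding cycle_weight_def sw_weight_def by (simp add: n_def nx_def aa_def rank_def)
  also have "\<dots> = int (\<Sum>j<n. rank (aa j, cs!(nx j))) - int (\<Sum>j<n. rank (aa j, cs!j))"
    by (simp add: sum_subtractf)
  also have "\<dots> = 0" using eqC sC sN by simp
  finally show ?thesis .
qed

end


theorem lemma3: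
  fixes A :: "'a set" and P :: "'p set" and E :: "('a \<times> 'p) set"
    and rk :: "'a \<Rightarrow> 'p \<Rightarrow> nat" and r :: nat
    and M :: "('a \<times> ('p + 'a)) set" and cs :: "('p + 'a) list"
  assumes "finite A" and "finite P" and "E \<subseteq> A \<times> P"
    and "\<forall>(a, p) \<in> E. 1 \<le> rk a p \<and> rk a p \<le> r"
    and "rank_maximal A E rk r M"
    and "sw_cycle A P E rk r M cs"
  shows "cycle_weight r rk M cs = 0"
proof -
  interpret inst A P E rk r using assms(1-4) by unfold_locales
  show ?thesis by (rule final[OF assms(5,6)])
qed

end
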